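(* Let $\mathcal S=\{s_1,\dots,s_k\}\subseteq\Sigma^n$. Let $s^*_H$ be the lexicographically minimal string among all strings $t\in\Sigma^n$ minimizing $\sum_{j}\partial_{Ham}(s_j,t)$, and let $s^*_{SH}$ be the lexicographically minimal string among all strings $t\in\Sigma^n$ minimizing $\sum_j\partial_{SH}(s_j,t)$. Then for every $i\in[1..n]$ with $s^*_{SH}[i]\ne s^*_H[i]$, we have $SW(\mathcal S,s^*_{SH},i-1)\ne\emptyset$ or $SW(\mathcal S,s^*_{SH},i)\ne\emptyset$.
   Context: The swap at position $p$ exchanges the letters at $p,p+1$; a swap permutation is a set of swaps at positions pairwise differing by at least $2$; equal-length strings are matching if a swap permutation transforms one into the other. Swap distance $\partial_S(u,v)$: $+\infty$ if not matching, else the number of swaps in the unique swap permutation from $u$ to $v$ never swapping identical letters. Swap+Hamming distance $\partial_{SH}(u,v)=\min_t\big(\partial_S(u,v')\ldots\big)$, precisely $\partial_{SH}(u,v)=\min_{t}\big(\partial_S(u,t)+\partial_{Ham}(t,v)\big)$. Greedy swaps: for strings $t,s$ of equal length, scanning $i=1,2,\dots$ left to right, a swap is counted at position $i$ iff $t[i]\ne t[i+1]$, $t[i]=s[i+1]$, $t[i+1]=s[i]$, and no swap was counted at position $i-1$ (this greedy procedure realizes $\partial_{SH}$). For a string $t$ and position $i$, $SW(\mathcal S,t,i)$ is the set of indices $j\in[1..k]$ such that the greedy procedure applied to $(t,s_j)$ counts a swap at position $i$ (with $SW(\mathcal S,t,0)=\emptyset$). *)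

theory Defs
  imports Main "HOL-Library.Extended_Nat"
begin

(* Strings are lists; positions in the paper are 1-based: u[p] = u ! (p - 1).
   A swap at (1-based) position p exchanges u[p] and u[p+1]. *)

definition swap_perm :: "nat \<Rightarrow> nat set \<Rightarrow> bool" where
  "swap_perm n P \<longleftrightarrow> P \<subseteq> {1..<n} \<and>
     (\<forall>p\<in>P. \<forall>q\<in>P. p \<noteq> q \<longrightarrow> p + 2 \<le> q \<or> q + 2 \<le> p)"

definition apply_swaps :: "nat set \<Rightarrow> 'a list \<Rightarrow> 'a list" where
  "apply_swaps P u = map (\<lambda>i. if i \<in> P then u ! i
                               else if i - 1 \<in> P \<and> i \<ge> 2 then u ! (i - 2)
                               else u ! (i - 1)) [1..<Suc (length u)]"

definition matching :: "'a list \<Rightarrow> 'a list \<Rightarrow> bool" where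
  "matching u v \<longleftrightarrow> length u = length v \<and>
     (\<exists>P. swap_perm (length u) P \<and> apply_swaps P u = v)"

definition swap_dist :: "'a list \<Rightarrow> 'a list \<Rightarrow> enat" where
  "swap_dist u v = (if matching u v then
     enat (card (THE P. swap_perm (length u) P \<and> apply_swaps P u = v \<and>
                        (\<forall>p\<in>P. u ! (p - 1) \<noteq> u ! p)))
     else \<infinity>)"

definition ham_dist :: "'a list \<Rightarrow> 'a list \<Rightarrow> nat" where
  "ham_dist u v = card {i. i < length u \<and> u ! i \<noteq> v ! i}"

definition sh_dist :: "'a list \<Rightarrow> 'a list \<Rightarrow> enat" where
  "sh_dist u v = (INF t \<in> {t. length t = length u}. swap_dist u t + enat (ham_dist t v))"

fun greedy_at :: "'a list \<Rightarrow> 'a list \<Rightarrow> nat \<Rightarrow> bool" where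
  "greedy_at t s 0 = False"
| "greedy_at t s (Suc i) =
     (Suc i < length t \<and> t ! i \<noteq> t ! Suc i \<and> t ! i = s ! Suc i \<and>
      t ! Suc i = s ! i \<and> \<not> greedy_at t s i)"

definition SW :: "'a list list \<Rightarrow> 'a list \<Rightarrow> nat \<Rightarrow> nat set" where
  "SW S t i = {j \<in> {1..length S}. greedy_at t (S ! (j - 1)) i}"

definition strings :: "'a set \<Rightarrow> nat \<Rightarrow> 'a list set" where
  "strings Sig n = {t. set t \<subseteq> Sig \<and> length t = n}"

definition lex_less :: "'a::linorder list \<Rightarrow> 'a list \<Rightarrow> bool" where
  "lex_less x y \<longleftrightarrow> (x, y) \<in> lexord {(a, b). a < b}"

definition is_lex_min :: "'a::linorder list set \<Rightarrow> 'a list \<Rightarrow> bool" where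
  "is_lex_min A x \<longleftrightarrow> x \<in> A \<and> (\<forall>y\<in>A. y \<noteq> x \<longrightarrow> lex_less x y)"

definition minimizers :: "('b \<Rightarrow> 'c::linorder) \<Rightarrow> 'b set \<Rightarrow> 'b set" where
  "minimizers f A = {t \<in> A. \<forall>t'\<in>A. f t \<le> f t'}"

end

theory Submission
  imports Defs
begin

definition ind :: "bool \<Rightarrow> nat" where "ind b = (if b then 1 else 0)"

lemma ham_sum: "ham_dist u v = (\<Sum>k<length u. ind (u!k \<noteq> v!k))"
  unfolding ham_dist_def ind_def by (simp add: sum.If_cases Int_def lessThan_def conj_commute)

lemma length_apply[simp]: "length (apply_swaps P u) = length u"
  by (simp add: apply_swaps_def del: upt_Suc)

lemma nth_apply: "k < length u \<Longrightarrow> apply_swaps P u ! k =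
  (if Suc k \<in> P then u ! Suc k else if k \<in> P \<and> k \<ge> 1 then u ! (k-1) else u ! k)"
  by (simp add: apply_swaps_def del: upt_Suc)

lemma apply_empty[simp]: "apply_swaps {} u = u"
  by (rule nth_equalityI) (auto simp: nth_apply)

lemma sp_range: "swap_perm n P \<Longrightarrow> p \<in> P \<Longrightarrow> 1 \<le> p \<and> p < n"
  unfolding swap_perm_def by auto

lemma sp_sep: "swap_perm n P \<Longrightarrow> p \<in> P \<Longrightarrow> Suc p \<notin> P"
  unfolding swap_perm_def by fastforce

lemma sp_finite: "swap_perm n P \<Longrightarrow> finite P"
  unfolding swap_perm_def using finite_subset by blast

lemma sp_subset: "swap_perm n P \<Longrightarrow> Q \<subseteq> P \<Longrightarrow> swap_perm n Q"
  unfolding swap_perm_def by blast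

lemma sum_split2: "i < n \<Longrightarrow> j < n \<Longrightarrow> i \<noteq> j \<Longrightarrow>
  sum f {..<(n::nat)} = f i + f j + sum f ({..<n} - {i,j})"
proof -
  assume a: "i < n" "j < n" "i \<noteq> j"
  have "{..<n} = insert i (insert j ({..<n} - {i,j}))" using a by auto
  then have "sum f {..<n} = sum f (insert i (insert j ({..<n} - {i,j})))" by simp
  also have "\<dots> = f i + f j + sum f ({..<n} - {i,j})" using a by (simp add: add.assoc)
  finally show ?thesis .
qed

lemma step:
  assumes sp: "swap_perm n P" and p: "p \<in> P" and ls: "length s = n" and lx: "length x = n"
  shows "ham_dist (apply_swaps (P-{p}) s) x + ind (s!p \<noteq> x!(p-1)) + ind (s!(p-1) \<noteq> x!p)
       = ham_dist (apply_swaps P s) x + ind (s!(p-1) \<noteq> x!(p-1)) + ind (s!p \<noteq> x!p)"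
proof -
  have r: "1 \<le> p" "p < n" using sp_range[OF sp p] by auto
  have n1: "Suc p \<notin> P" using sp_sep[OF sp p] .
  have n2: "p - 1 \<notin> P"
  proof
    assume "p - 1 \<in> P" then have "Suc (p-1) \<notin> P" using sp_sep[OF sp] by blast
    with r p show False by simp
  qed
  define a where "a = apply_swaps P s"
  define b where "b = apply_swaps (P-{p}) s"
  have a1: "a!(p-1) = s!p" using r ls p by (simp add: a_def nth_apply)
  have a2: "a!p = s!(p-1)" using r ls n1 p by (simp add: a_def nth_apply)
  have b1: "b!(p-1) = s!(p-1)" using r ls n2 by (simp add: b_def nth_apply)
  have b2: "b!p = s!p" using r ls n1 by (simp add: b_def nth_apply)
  have eq: "a!k = b!k" if "k < n" "k \<noteq> p-1" "k \<noteq> p" for k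
    using that ls r by (auto simp: a_def b_def nth_apply)
  let ?R = "{..<n} - {p-1,p}"
  have "ham_dist b x = ind (b!(p-1) \<noteq> x!(p-1)) + ind (b!p \<noteq> x!p) + (\<Sum>k\<in>?R. ind (b!k \<noteq> x!k))"
    unfolding ham_sum using ls r by (simp add: b_def sum_split2[of "p-1" n p])
  moreover have "ham_dist a x = ind (a!(p-1) \<noteq> x!(p-1)) + ind (a!p \<noteq> x!p) + (\<Sum>k\<in>?R. ind (a!k \<noteq> x!k))"
    unfolding ham_sum using ls r by (simp add: a_def sum_split2[of "p-1" n p])
  moreover have "(\<Sum>k\<in>?R. ind (a!k \<noteq> x!k)) = (\<Sum>k\<in>?R. ind (b!k \<noteq> x!k))"
    by (rule sum.cong) (auto simp: eq)
  ultimately show ?thesis unfolding a_def[symmetric] b_def[symmetric] using a1 a2 b1 b2 by simp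
qed

definition good :: "'a list \<Rightarrow> 'a list \<Rightarrow> nat \<Rightarrow> bool" where
  "good x s p \<longleftrightarrow> 1 \<le> p \<and> p < length x \<and> x!(p-1) \<noteq> x!p \<and> x!(p-1) = s!p \<and> x!p = s!(p-1)"

lemma greedy_Suc: "greedy_at x s (Suc i) \<longleftrightarrow> good x s (Suc i) \<and> \<not> greedy_at x s i"
  by (auto simp: good_def)

lemma greedy_good: "greedy_at x s p \<Longrightarrow> good x s p"
  by (cases p) (auto simp: good_def)

definition Pg :: "'a list \<Rightarrow> 'a list \<Rightarrow> nat set" where "Pg x s = {p. greedy_at x s p}"

lemma sp_Pg: "swap_perm (length x) (Pg x s)"
  unfolding swap_perm_def Pg_def
proof safe
  fix p assume "greedy_at x s p" then show "p \<in> {1..<length x}"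
    using greedy_good[of x s p] by (auto simp: good_def)
next
  fix p q assume a: "greedy_at x s p" "greedy_at x s q" "p \<noteq> q" "\<not> q + 2 \<le> p"
  show "p + 2 \<le> q"
  proof (rule ccontr)
    assume "\<not> p + 2 \<le> q"
    with a(3,4) have "q = Suc p \<or> p = Suc q" by linarith
    then show False using a(1,2) greedy_Suc by metis
  qed
qed

lemma Pg_noniden: "p \<in> Pg x s \<Longrightarrow> s!(p-1) \<noteq> s!p"
  unfolding Pg_def using greedy_good[of x s p] by (auto simp: good_def)

lemma cost_lower:
  assumes sp: "swap_perm n P" and ls: "length s = n" and lx: "length x = n"
  and QP: "Q \<subseteq> P"
  shows "ham_dist s x \<le> card Q + ham_dist (apply_swaps Q s) x + card {q\<in>Q. good x s q}"
proof -
  have "finite Q" using finite_subset[OF QP sp_finite[OF sp]] .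
  then show ?thesis using QP
proof (induction Q rule: finite_induct)
  case empty then show ?case by simp
next
  case (insert p Q)
  note 3 = insert.hyps insert.prems insert.IH
  have spi: "swap_perm n (insert p Q)" using sp_subset[OF sp insert.prems] .
  have IH: "ham_dist s x \<le> card Q + ham_dist (apply_swaps Q s) x + card {q\<in>Q. good x s q}"
    using 3 by auto
  have st: "ham_dist (apply_swaps Q s) x + ind (s!p \<noteq> x!(p-1)) + ind (s!(p-1) \<noteq> x!p)
       = ham_dist (apply_swaps (insert p Q) s) x + ind (s!(p-1) \<noteq> x!(p-1)) + ind (s!p \<noteq> x!p)"
    using step[OF spi _ ls lx, of p] 3(2) by simp
  have r: "1 \<le> p" "p < n" using sp_range[OF spi] by auto
  have fin: "finite {q\<in>Q. good x s q}" using 3(1) by simp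
  have cg: "card {q\<in>insert p Q. good x s q} = card {q\<in>Q. good x s q} + ind (good x s p)"
  proof (cases "good x s p")
    case True
    then have "{q\<in>insert p Q. good x s q} = insert p {q\<in>Q. good x s q}" by auto
    then show ?thesis using fin 3(2) True by (simp add: ind_def)
  next
    case False
    then have "{q\<in>insert p Q. good x s q} = {q\<in>Q. good x s q}" by auto
    then show ?thesis using False by (simp add: ind_def)
  qed
  have key: "ham_dist (apply_swaps Q s) x \<le> ham_dist (apply_swaps (insert p Q) s) x + 1 + ind (good x s p)"
    using st r lx unfolding ind_def good_def by (auto split: if_splits)
  show ?case using IH key cg 3(1,2) by simp
qed
qed

lemma cost_greedy:
  assumes ls: "length s = length x"
  and QP: "Q \<subseteq> Pg x s"
  shows "ham_dist (apply_swaps Q s) x + 2 * card Q = ham_dist s x"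
proof -
  have "finite Q" using finite_subset[OF QP sp_finite[OF sp_Pg]] .
  then show ?thesis using QP
proof (induction Q rule: finite_induct)
  case empty then show ?case by simp
next
  case (insert p Q)
  note 3 = insert.hyps insert.prems insert.IH
  have spi: "swap_perm (length x) (insert p Q)" using sp_subset[OF sp_Pg insert.prems] .
  have st: "ham_dist (apply_swaps Q s) x + ind (s!p \<noteq> x!(p-1)) + ind (s!(p-1) \<noteq> x!p)
       = ham_dist (apply_swaps (insert p Q) s) x + ind (s!(p-1) \<noteq> x!(p-1)) + ind (s!p \<noteq> x!p)"
    using step[OF spi _ ls, of p] 3(2) by simp
  have g: "good x s p" using insert.prems greedy_good unfolding Pg_def by auto
  have "ham_dist (apply_swaps Q s) x = ham_dist (apply_swaps (insert p Q) s) x + 2"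
    using st g unfolding ind_def good_def by auto
  then show ?case using 3 by simp
qed
qed

lemma greedy_max_aux:
  assumes sep: "\<forall>p\<in>Q. \<forall>q\<in>Q. p\<noteq>q \<longrightarrow> p+2\<le>q \<or> q+2\<le>p" and gq: "\<forall>q\<in>Q. good x s q"
  shows "card {q\<in>Q. q \<le> m} \<le> card {p\<in>Pg x s. p \<le> m}"
proof (induction m rule: less_induct)
  case (less m)
  have fP: "finite {p\<in>Pg x s. p \<le> k}" for k by simp
  show ?case
  proof (cases m)
    case 0
    have e: "{q\<in>Q. q \<le> m} = {}" using gq \<open>m = 0\<close> by (auto simp: good_def)
    show ?thesis by (subst e) simp
  next
    case (Suc m')
    show ?thesis
    proof (cases "m \<in> Q")
      case False
      then have "{q\<in>Q. q \<le> m} = {q\<in>Q. q \<le> m'}" using Suc by (auto simp: le_Suc_eq)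
      moreover have "card {p\<in>Pg x s. p \<le> m'} \<le> card {p\<in>Pg x s. p \<le> m}"
        by (rule card_mono[OF fP]) (auto simp: Suc)
      ultimately show ?thesis using less[of m'] Suc by simp
    next
      case True
      have m'Q: "m' \<notin> Q" using sep True Suc by fastforce
      show ?thesis
      proof (cases "greedy_at x s m")
        case True
        have "{q\<in>Q. q \<le> m} = insert m {q\<in>Q. q \<le> m'}" using Suc \<open>m\<in>Q\<close> by auto
        moreover have "{p\<in>Pg x s. p \<le> m} = insert m {p\<in>Pg x s. p \<le> m'}"
          using Suc True by (auto simp: Pg_def)
        ultimately show ?thesis using less[of m'] Suc by simp
      next
        case False
        have gm: "greedy_at x s m'" using False gq \<open>m\<in>Q\<close> Suc greedy_Suc by metis
        then obtain m'' where m'': "m' = Suc m''" by (cases m') auto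
        have "{q\<in>Q. q \<le> m} = insert m {q\<in>Q. q \<le> m''}" using Suc m'' \<open>m\<in>Q\<close> m'Q by (auto simp: le_Suc_eq)
        moreover have "{p\<in>Pg x s. p \<le> m} = insert m' {p\<in>Pg x s. p \<le> m''}"
          using Suc m'' False gm by (auto simp: Pg_def le_Suc_eq)
        ultimately show ?thesis using less[of m''] Suc m'' by simp
      qed
    qed
  qed
qed

lemma greedy_max:
  assumes sep: "\<forall>p\<in>Q. \<forall>q\<in>Q. p\<noteq>q \<longrightarrow> p+2\<le>q \<or> q+2\<le>p" and gq: "\<forall>q\<in>Q. good x s q"
  shows "card Q \<le> card (Pg x s)"
proof -
  have "{q\<in>Q. q \<le> length x} = Q" using gq by (auto simp: good_def)
  moreover have "{p\<in>Pg x s. p \<le> length x} = Pg x s"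
    using sp_range[OF sp_Pg] by fastforce
  ultimately show ?thesis using greedy_max_aux[OF sep gq, of "length x"] by simp
qed

lemma uniq_aux:
  assumes spP: "swap_perm n P" and spQ: "swap_perm n Q" and lu: "length u = n"
    and eq: "apply_swaps P u = apply_swaps Q u" and ni: "\<forall>p\<in>P. u!(p-1) \<noteq> u!p"
    and p: "p \<in> P" "p \<notin> Q" and below: "\<forall>q<p. q \<in> P \<longleftrightarrow> q \<in> Q"
  shows False
proof -
  have r: "1 \<le> p" "p < n" using sp_range[OF spP p(1)] by auto
  have "p - 1 \<notin> Q"
  proof
    assume pq: "p - 1 \<in> Q"
    then have "p - 1 \<ge> 1" using sp_range[OF spQ] by blast
    moreover have "p - 1 < p" using r by simp
    ultimately have "p - 1 \<in> P" "p - 1 \<noteq> 0" using below pq by auto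
    then have "Suc (p-1) \<notin> P" using sp_sep[OF spP] by blast
    with r p show False by simp
  qed
  then have "apply_swaps Q u ! (p-1) = u!(p-1)" using r lu p by (simp add: nth_apply)
  moreover have "apply_swaps P u ! (p-1) = u!p" using r lu p by (simp add: nth_apply)
  ultimately show False using eq ni p by auto
qed

lemma swap_unique:
  assumes spP: "swap_perm n P" and spQ: "swap_perm n Q" and lu: "length u = n"
    and eq: "apply_swaps P u = apply_swaps Q u" and niP: "\<forall>p\<in>P. u!(p-1) \<noteq> u!p"
    and niQ: "\<forall>p\<in>Q. u!(p-1) \<noteq> u!p"
  shows "P = Q"
proof (rule ccontr)
  assume ne: "P \<noteq> Q"
  define D where "D = (P - Q) \<union> (Q - P)"
  have fD: "finite D" using sp_finite[OF spP] sp_finite[OF spQ] by (simp add: D_def)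
  have "D \<noteq> {}" using ne by (auto simp: D_def)
  define p where "p = Min D"
  have pD: "p \<in> D" using fD \<open>D \<noteq> {}\<close> by (simp add: p_def)
  have below: "\<forall>q<p. q \<in> P \<longleftrightarrow> q \<in> Q"
  proof (intro allI impI)
    fix q assume "q < p"
    then have "q \<notin> D" using Min_le[OF fD] p_def by fastforce
    then show "q \<in> P \<longleftrightarrow> q \<in> Q" by (auto simp: D_def)
  qed
  show False
  proof (cases "p \<in> P")
    case True
    then have "p \<notin> Q" using pD by (auto simp: D_def)
    then show False using uniq_aux[OF spP spQ lu eq niP True] below by blast
  next
    case False
    then have "p \<in> Q" using pD by (auto simp: D_def)
    then show False using uniq_aux[OF spQ spP lu eq[symmetric] niQ _ False] below by blast
  qed
qed

lemma filter_apply: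
  assumes sp: "swap_perm n P" and lu: "length u = n"
  shows "apply_swaps {p\<in>P. u!(p-1) \<noteq> u!p} u = apply_swaps P u"
proof (rule nth_equalityI)
  show "length (apply_swaps {p\<in>P. u!(p-1) \<noteq> u!p} u) = length (apply_swaps P u)" by simp
next
  fix k assume "k < length (apply_swaps {p\<in>P. u!(p-1) \<noteq> u!p} u)"
  then have k: "k < length u" by simp
  have s1: "Suc k \<in> P \<Longrightarrow> k \<notin> P" using sp_sep[OF sp] by blast
  show "apply_swaps {p\<in>P. u!(p-1) \<noteq> u!p} u ! k = apply_swaps P u ! k"
    using k s1 by (auto simp: nth_apply)
qed

lemma swap_dist_apply:
  assumes sp: "swap_perm (length u) P" and ni: "\<forall>p\<in>P. u!(p-1) \<noteq> u!p"
  shows "swap_dist u (apply_swaps P u) = enat (card P)"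
proof -
  have m: "matching u (apply_swaps P u)" unfolding matching_def using sp by auto
  have "(THE Q. swap_perm (length u) Q \<and> apply_swaps Q u = apply_swaps P u \<and>
                        (\<forall>p\<in>Q. u ! (p - 1) \<noteq> u ! p)) = P"
  proof (rule the_equality)
    show "swap_perm (length u) P \<and> apply_swaps P u = apply_swaps P u \<and> (\<forall>p\<in>P. u ! (p - 1) \<noteq> u ! p)"
      using sp ni by auto
  next
    fix Q assume "swap_perm (length u) Q \<and> apply_swaps Q u = apply_swaps P u \<and> (\<forall>p\<in>Q. u ! (p - 1) \<noteq> u ! p)"
    then show "Q = P" using swap_unique[OF _ sp refl _ _ ni] by blast
  qed
  then show ?thesis using m by (simp add: swap_dist_def)
qed

lemma swap_dist_matching:
  assumes "matching u w"
  shows "\<exists>P. swap_perm (length u) P \<and> apply_swaps P u = w \<and> swap_dist u w = enat (card P)"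
proof -
  obtain P where P: "swap_perm (length u) P" "apply_swaps P u = w" using assms matching_def by blast
  define P' where "P' = {p\<in>P. u!(p-1) \<noteq> u!p}"
  have sp': "swap_perm (length u) P'" using sp_subset[OF P(1)] P'_def by auto
  have a: "apply_swaps P' u = w" using filter_apply[OF P(1) refl] P(2) P'_def by simp
  have "swap_dist u w = enat (card P')" using swap_dist_apply[OF sp'] a P'_def by auto
  then show ?thesis using sp' a by blast
qed

lemma sh_eq:
  assumes ls: "length s = length x"
  shows "sh_dist s x = enat (ham_dist s x - card (Pg x s))"
proof (rule antisym)
  define w where "w = apply_swaps (Pg x s) s"
  have spg: "swap_perm (length s) (Pg x s)" using sp_Pg ls by simp
  have sd: "swap_dist s w = enat (card (Pg x s))"
    unfolding w_def by (rule swap_dist_apply[OF spg]) (use Pg_noniden in blast)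
  have hw: "ham_dist w x + 2 * card (Pg x s) = ham_dist s x"
    unfolding w_def by (rule cost_greedy[OF ls]) simp
  have "sh_dist s x \<le> swap_dist s w + enat (ham_dist w x)"
    unfolding sh_dist_def by (rule INF_lower) (simp add: w_def)
  also have "\<dots> = enat (ham_dist s x - card (Pg x s))" using sd hw by simp
  finally show "sh_dist s x \<le> enat (ham_dist s x - card (Pg x s))" .
next
  show "enat (ham_dist s x - card (Pg x s)) \<le> sh_dist s x"
    unfolding sh_dist_def
  proof (rule INF_greatest)
    fix t :: "'a list" assume "t \<in> {t. length t = length s}"
    show "enat (ham_dist s x - card (Pg x s)) \<le> swap_dist s t + enat (ham_dist t x)"
    proof (cases "matching s t")
      case False then show ?thesis by (simp add: swap_dist_def)
    next
      case True
      then obtain P where P: "swap_perm (length s) P" "apply_swaps P s = t" "swap_dist s t = enat (card P)"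
        using swap_dist_matching by blast
      have c: "ham_dist s x \<le> card P + ham_dist t x + card {q\<in>P. good x s q}"
        using cost_lower[OF P(1) refl ls[symmetric] order_refl] P(2) by simp
      have g: "card {q\<in>P. good x s q} \<le> card (Pg x s)"
      proof (rule greedy_max)
        show "\<forall>p\<in>{q\<in>P. good x s q}. \<forall>q\<in>{q\<in>P. good x s q}. p\<noteq>q \<longrightarrow> p+2\<le>q \<or> q+2\<le>p"
          using P(1) unfolding swap_perm_def by blast
      qed auto
      show ?thesis using c g P(3) by simp
    qed
  qed
qed

lemma sh_upper:
  assumes "length y = length s" and lx: "length x = length s"
  shows "sh_dist s y \<le> enat (card (Pg x s) + ham_dist (apply_swaps (Pg x s) s) y)"
proof -
  have "sh_dist s y \<le> swap_dist s (apply_swaps (Pg x s) s) + enat (ham_dist (apply_swaps (Pg x s) s) y)"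
    unfolding sh_dist_def by (rule INF_lower) simp
  moreover have "swap_dist s (apply_swaps (Pg x s) s) = enat (card (Pg x s))"
    by (rule swap_dist_apply) (use sp_Pg[of x s] lx Pg_noniden in auto)
  ultimately show ?thesis by simp
qed

lemma ham_update:
  assumes k: "k < length u" and lv: "length v = length u"
  shows "ham_dist u (v[k:=d]) + ind (u!k \<noteq> v!k) = ham_dist u v + ind (u!k \<noteq> d)"
proof -
  have sp: "sum f {..<length u} = f k + sum f ({..<length u} - {k})" for f :: "nat \<Rightarrow> nat"
    using k by (simp add: sum.remove)
  have "(\<Sum>i\<in>{..<length u} - {k}. ind (u!i \<noteq> v[k:=d]!i)) = (\<Sum>i\<in>{..<length u} - {k}. ind (u!i \<noteq> v!i))"
    by (rule sum.cong) auto
  then show ?thesis unfolding ham_sum using sp k lv by simp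
qed

lemma lex_update:
  assumes "lex_less v (v[k:=d])" and "k < length v"
  shows "v!k < d"
proof -
  from assms(1) obtain i where i: "i < length v" "take i v = take i (v[k:=d])" "v!i < v[k:=d]!i"
    unfolding lex_less_def lexord_take_index_conv by auto
  have "i = k" using i by (cases "i = k") auto
  then show ?thesis using i assms(2) by simp
qed

lemma sum_enat: "(\<Sum>j\<in>A. enat (f j)) = enat (\<Sum>j\<in>A. f j)"
  by (induction A rule: infinite_finite_induct) (auto simp: zero_enat_def)

theorem mainTheorem13:
  fixes Sig :: "'a::linorder set" and S :: "'a list list" and n :: nat
    and sH sSH :: "'a list"
  assumes "finite Sig" and "Sig \<noteq> {}"
    and "\<forall>s\<in>set S. s \<in> strings Sig n"
    and "is_lex_min (minimizers (\<lambda>t. \<Sum>j<length S. ham_dist (S ! j) t) (strings Sig n)) sH"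
    and "is_lex_min (minimizers (\<lambda>t. \<Sum>j<length S. sh_dist (S ! j) t) (strings Sig n)) sSH"
  shows "\<forall>i\<in>{1..n}. sSH ! (i - 1) \<noteq> sH ! (i - 1) \<longrightarrow>
           SW S sSH (i - 1) \<noteq> {} \<or> SW S sSH i \<noteq> {}"
proof (intro ballI impI)
  fix i assume iI: "i \<in> {1..n}" and dif0: "sSH ! (i-1) \<noteq> sH ! (i-1)"
  define F where "F = (\<lambda>t. \<Sum>j<length S. sh_dist (S ! j) t)"
  define H where "H = (\<lambda>t. \<Sum>j<length S. ham_dist (S ! j) t)"
  define L where "L = (\<lambda>j x. ham_dist (S!j) x - card (Pg x (S!j)))"
  define k where "k = i - 1"
  have ik: "i = Suc k" and kn: "k < n" using iI k_def by auto
  have dif: "sSH ! k \<noteq> sH ! k" using dif0 k_def by simp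
  have tS: "sSH \<in> strings Sig n" and tmin: "\<forall>y\<in>strings Sig n. F sSH \<le> F y"
    and tlex: "\<forall>y\<in>minimizers F (strings Sig n). y \<noteq> sSH \<longrightarrow> lex_less sSH y"
    using assms(5) unfolding is_lex_min_def minimizers_def F_def by auto
  have hS: "sH \<in> strings Sig n" and hmin: "\<forall>y\<in>strings Sig n. H sH \<le> H y"
    and hlex: "\<forall>y\<in>minimizers H (strings Sig n). y \<noteq> sH \<longrightarrow> lex_less sH y"
    using assms(4) unfolding is_lex_min_def minimizers_def H_def by auto
  have lt: "length sSH = n" and lh: "length sH = n" using tS hS by (auto simp: strings_def)
  have lSj: "length (S!j) = n" if "j < length S" for j
    using assms(3) that nth_mem[OF that] by (auto simp: strings_def)
  have FL: "F x = enat (\<Sum>j<length S. L j x)" if "x \<in> strings Sig n" for x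
  proof -
    have "F x = (\<Sum>j<length S. enat (L j x))"
      unfolding F_def L_def using that lSj by (intro sum.cong refl sh_eq) (auto simp: strings_def)
    then show ?thesis by (simp add: sum_enat)
  qed
  show "SW S sSH (i-1) \<noteq> {} \<or> SW S sSH i \<noteq> {}"
  proof (rule ccontr)
    assume "\<not> (SW S sSH (i-1) \<noteq> {} \<or> SW S sSH i \<noteq> {})"
    then have e0: "SW S sSH (i-1) = {}" "SW S sSH i = {}" by blast+
    then have e1: "SW S sSH k = {}" and e2: "SW S sSH (Suc k) = {}"
      unfolding k_def[symmetric] ik[symmetric] by blast+
    have ng: "\<not> greedy_at sSH (S!j) k \<and> \<not> greedy_at sSH (S!j) (Suc k)" if "j < length S" for j
    proof -
      have "Suc j \<in> {1..length S}" using that by simp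
      then have a: "\<not> greedy_at sSH (S!(Suc j - 1)) k" "\<not> greedy_at sSH (S!(Suc j - 1)) (Suc k)"
        using e1 e2 unfolding SW_def by blast+
      then show ?thesis by simp
    qed
    define c where "c = sH ! k"
    define t' where "t' = sSH[k:=c]"
    define h' where "h' = sH[k := sSH!k]"
    have cS: "c \<in> Sig" using hS kn lh unfolding c_def strings_def by auto
    have tk: "sSH ! k \<in> Sig" using tS kn lt unfolding strings_def by auto
    have t'S: "t' \<in> strings Sig n" using tS cS set_update_subset_insert[of sSH k c]
      unfolding t'_def strings_def by auto
    have h'S: "h' \<in> strings Sig n" using hS tk set_update_subset_insert[of sH k "sSH!k"]
      unfolding h'_def strings_def by auto
    define A where "A = (\<Sum>j<length S. ind (S!j!k \<noteq> sSH!k))"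
    define B where "B = (\<Sum>j<length S. ind (S!j!k \<noteq> c))"
    have perj: "L j t' + ind (S!j!k \<noteq> sSH!k) \<le> L j sSH + ind (S!j!k \<noteq> c)" if j: "j < length S" for j
    proof -
      define s where "s = S!j"
      define P where "P = Pg sSH s"
      define w where "w = apply_swaps P s"
      have ls: "length s = n" using lSj[OF j] s_def by simp
      have lt': "length t' = n" using lt t'_def by simp
      have "enat (L j t') = sh_dist s t'" unfolding L_def s_def using sh_eq[of "S!j" t'] lSj[OF j] lt' by simp
      also have "\<dots> \<le> enat (card P + ham_dist w t')" unfolding P_def w_def
        by (rule sh_upper) (use ls lt' lt in auto)
      finally have u1: "L j t' \<le> card P + ham_dist w t'" by simp
      have lw: "length w = n" using ls w_def by simp
      have u2: "ham_dist w t' + ind (w!k \<noteq> sSH!k) = ham_dist w sSH + ind (w!k \<noteq> c)"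
        unfolding t'_def using ham_update[of k w sSH c] lw lt kn by simp
      have "Suc k \<notin> P" "k \<notin> P" using ng[OF j] unfolding P_def Pg_def s_def by auto
      then have u3: "w!k = s!k" using kn ls unfolding w_def by (simp add: nth_apply)
      have u4: "ham_dist w sSH + 2 * card P = ham_dist s sSH"
        unfolding w_def P_def by (rule cost_greedy) (use ls lt in auto)
      have "L j sSH = ham_dist s sSH - card P" unfolding L_def s_def P_def by simp
      then show ?thesis using u1 u2 u3 u4 s_def by simp
    qed
    have hperj: "ham_dist (S!j) h' + ind (S!j!k \<noteq> c) = ham_dist (S!j) sH + ind (S!j!k \<noteq> sSH!k)"
      if j: "j < length S" for j
      unfolding h'_def c_def using ham_update[of k "S!j" sH "sSH!k"] lSj[OF j] lh kn by simp
    have s1: "(\<Sum>j<length S. L j t') + A \<le> (\<Sum>j<length S. L j sSH) + B"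
      unfolding A_def B_def sum.distrib[symmetric] by (rule sum_mono) (use perj in auto)
    have s2: "H h' + B = H sH + A"
      unfolding A_def B_def H_def sum.distrib[symmetric] by (rule sum.cong) (use hperj in auto)
    have "F sSH \<le> F t'" using tmin t'S by blast
    then have s3: "(\<Sum>j<length S. L j sSH) \<le> (\<Sum>j<length S. L j t')" using FL tS t'S by simp
    have s4: "H sH \<le> H h'" using hmin h'S by blast
    have AB: "A = B" using s1 s2 s3 s4 by linarith
    have "F t' \<le> F sSH" using FL[OF tS] FL[OF t'S] s1 AB by simp
    then have "\<forall>y\<in>strings Sig n. F t' \<le> F y" using tmin by (meson order_trans)
    then have "t' \<in> minimizers F (strings Sig n)" using t'S unfolding minimizers_def by blast
    moreover have "t' \<noteq> sSH" using dif kn lt unfolding t'_def c_def by (metis nth_list_update_eq)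
    ultimately have "lex_less sSH t'" using tlex by blast
    then have lt1: "sSH!k < c" unfolding t'_def using lex_update[of sSH k c] kn lt by simp
    have "H h' \<le> H sH" using s2 AB by simp
    then have "\<forall>y\<in>strings Sig n. H h' \<le> H y" using hmin by (meson order_trans)
    then have "h' \<in> minimizers H (strings Sig n)" using h'S unfolding minimizers_def by blast
    moreover have "h' \<noteq> sH" using dif kn lh unfolding h'_def by (metis nth_list_update_eq)
    ultimately have "lex_less sH h'" using hlex by blast
    then have "sH!k < sSH!k" unfolding h'_def using lex_update[of sH k "sSH!k"] kn lh by simp
    then show False using lt1 c_def by simp
  qed
qed

end
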